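(* For integers $m,n\ge0$ let $p_m(t,n)=D_m(C(t);n)\in\mathbb Z[t]$. Then every $p_m(t,n)$ is a nonzero polynomial, $p_m(t,0)=1$, $p_m(t,1)=C_m(t)$, and for all $m\ge0$, $n\ge2$, $$p_m(t,n-1)p_{m+2}(t,n-1)-p_{m+1}(t,n-1)^2=p_m(t,n)\,p_{m+2}(t,n-2).$$ Consequently, if $(q_m(n))_{m,n\ge0}$ is any family of elements of the field $\mathbb Q(t)$ with $q_m(0)=1$, $q_m(1)=C_m(t)$ for all $m\ge0$ and $q_m(n-1)q_{m+2}(n-1)-q_{m+1}(n-1)^2=q_m(n)q_{m+2}(n-2)$ for all $m\ge0,n\ge2$, then $q_m(n)=p_m(t,n)$ for all $m,n\ge0$.
   Context: The Narayana polynomials are $C_0(t)=1$ and $C_n(t)=\sum_{k=0}^{n-1}\binom{n-1}{k}\binom{n}{k}\frac{1}{k+1}t^k$ for $n\ge1$ (so $C_n(1)$ is the Catalan number $C_n$); they are extended by $C_n(t)=0$ for $n<0$. For $m\in\mathbb Z$ and $n\ge0$, $D_m(C(t);n)=\det(C_{i+j+m}(t))_{i,j=0}^{n-1}$, the $0\times0$ determinant being $1$. *)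

theory Defs
  imports "Jordan_Normal_Form.Determinant"
    "HOL-Computational_Algebra.Polynomial_Factorial"
begin

definition narayana :: "nat \<Rightarrow> rat poly" where
  "narayana n = (if n = 0 then 1 else
     (\<Sum>k<n. monom (of_nat ((n - 1) choose k) * of_nat (n choose k) / of_nat (k + 1)) k))"

definition hankel_narayana :: "nat \<Rightarrow> nat \<Rightarrow> rat poly" where
  "hankel_narayana m n = det (mat n n (\<lambda>(i, j). narayana (i + j + m)))"

end

theory Submission
  imports Defs
begin



lemma mat_delete_idx[simp]:
  "i' < dim_row A - 1 \<Longrightarrow> j' < dim_col A - 1 \<Longrightarrow>
   mat_delete A i j $$ (i',j') = A $$ (if i' < i then i' else Suc i', if j' < j then j' else Suc j')"
  unfolding mat_delete_def by simp

lemma sum_single: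
  assumes "finite S" "j \<in> S" "\<And>l. l \<in> S \<Longrightarrow> l \<noteq> j \<Longrightarrow> f l = 0"
  shows "sum f S = f j"
proof -
  have "sum f S = f j + sum f (S - {j})" using assms by (simp add: sum.remove)
  also have "sum f (S - {j}) = 0" using assms by (intro sum.neutral) auto
  finally show ?thesis by simp
qed

lemma det_row_single:
  assumes A: "A \<in> carrier_mat n n" and i: "i < n" and j: "j < n"
    and z: "\<And>j'. j' < n \<Longrightarrow> j' \<noteq> j \<Longrightarrow> A $$ (i,j') = 0"
  shows "det A = A $$ (i,j) * cofactor A i j"
  unfolding laplace_expansion_row[OF A i]
  by (rule sum_single) (use j z in auto)

lemma det_col_single:
  assumes A: "A \<in> carrier_mat n n" and i: "i < n" and j: "j < n"
    and z: "\<And>i'. i' < n \<Longrightarrow> i' \<noteq> i \<Longrightarrow> A $$ (i',j) = 0"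
  shows "det A = A $$ (i,j) * cofactor A i j"
  unfolding laplace_expansion_column[OF A j]
  by (rule sum_single) (use i z in auto)

lemma mult_entry:
  assumes "A \<in> carrier_mat n n" "B \<in> carrier_mat n n" "i < n" "j < n"
  shows "(A * B) $$ (i,j) = (\<Sum>l<n. A $$ (i,l) * B $$ (l,j))"
  using assms by (simp add: scalar_prod_def atLeast0LessThan)

lemma desnanot_jacobi:
  fixes A :: "'a :: idom mat"
  assumes A: "A \<in> carrier_mat (Suc (Suc k)) (Suc (Suc k))" and d: "det A \<noteq> 0"
  shows "det (mat_delete A 0 0) * det (mat_delete A (Suc k) (Suc k))
       - det (mat_delete A 0 (Suc k)) * det (mat_delete A (Suc k) 0)
       = det A * det (mat_delete (mat_delete A 0 0) k k)"
proof -
  define n where "n = Suc (Suc k)"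
  define L where "L = Suc k"
  define c where "c = cofactor A"
  define M where "M = mat n n (\<lambda>(i,j). if j = 0 then c 0 i else if j = L then c L i else if i = j then 1 else 0)"
  define AM where "AM = mat n n (\<lambda>(i,j). if j = 0 then (if i = 0 then det A else 0) else if j = L then (if i = L then det A else 0) else A $$ (i,j))"
  have An: "A \<in> carrier_mat n n" using A n_def by simp
  have M: "M \<in> carrier_mat n n" by (simp add: M_def)
  have Ln: "L < n" "0 < L" by (auto simp: L_def n_def)
  have adj: "A * adj_mat A = det A \<cdot>\<^sub>m 1\<^sub>m n" using adj_mat(2)[OF An] .
  have adjent: "(\<Sum>l<n. A$$(i,l) * c j l) = (if i = j then det A else 0)" if ij: "i<n" "j<n" for i j
  proof -
    have "(A * adj_mat A) $$ (i,j) = (\<Sum>l<n. A$$(i,l) * c j l)"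
      using An ij adj_mat(1)[OF An] by (subst mult_entry[of _ n]) (auto simp: adj_mat_def c_def)
    then show ?thesis using adj ij by (cases "i = j") auto
  qed
  have AMeq: "A * M = AM"
  proof (rule eq_matI)
    fix i j assume "i < dim_row AM" "j < dim_col AM"
    hence ij: "i<n" "j<n" by (auto simp: AM_def)
    have "(A*M)$$(i,j) = (\<Sum>l<n. A$$(i,l) * M$$(l,j))" using An M ij by (rule mult_entry)
    also have "\<dots> = AM $$ (i,j)"
    proof (cases "j = 0")
      case True then show ?thesis using ij adjent[of i 0] Ln by (simp add: M_def AM_def)
    next
      case j0: False
      show ?thesis
      proof (cases "j = L")
        case True then show ?thesis using ij adjent[of i L] j0 Ln by (simp add: M_def AM_def)
      next
        case False
        have "(\<Sum>l<n. A$$(i,l) * M$$(l,j)) = A$$(i,j) * M$$(j,j)"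
          by (rule sum_single) (use ij j0 False in \<open>auto simp: M_def\<close>)
        then show ?thesis using ij j0 False by (simp add: M_def AM_def)
      qed
    qed
    finally show "(A*M)$$(i,j) = AM $$ (i,j)" .
  qed (use An in \<open>auto simp: AM_def M_def\<close>)
  define B where "B = mat_delete AM 0 0"
  have AMc: "AM \<in> carrier_mat n n" by (simp add: AM_def)
  have Bc: "B \<in> carrier_mat (Suc k) (Suc k)" by (simp add: B_def AM_def n_def mat_delete_def)
  have "det AM = AM $$ (0,0) * cofactor AM 0 0"
    by (rule det_col_single[OF AMc]) (auto simp: AM_def n_def)
  also have "cofactor AM 0 0 = det B" by (simp add: cofactor_def B_def)
  also have "det B = B $$ (k,k) * cofactor B k k"
    by (rule det_col_single[OF Bc]) (auto simp: B_def AM_def n_def L_def)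
  also have "cofactor B k k = det (mat_delete B k k)" by (simp add: cofactor_def)
  also have "mat_delete B k k = mat_delete (mat_delete A 0 0) k k"
    by (rule eq_matI) (use An in \<open>auto simp: B_def AM_def n_def L_def\<close>)
  finally have detAM: "det AM = det A * (det A * det (mat_delete (mat_delete A 0 0) k k))"
    by (simp add: AM_def B_def n_def L_def)
  define P where "P = mat_delete M 0 0"
  define Q where "Q = mat_delete M 0 L"
  have Pc: "P \<in> carrier_mat (Suc k) (Suc k)" by (simp add: P_def M_def n_def mat_delete_def)
  have Qc: "Q \<in> carrier_mat (Suc k) (Suc k)" by (simp add: Q_def M_def n_def mat_delete_def)
  have "det M = (\<Sum>j<n. M $$ (0,j) * cofactor M 0 j)" by (rule laplace_expansion_row[OF M]) (simp add: n_def)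
  also have "\<dots> = (\<Sum>j\<in>{0,L}. M $$ (0,j) * cofactor M 0 j)"
    by (rule sum.mono_neutral_right) (use Ln in \<open>auto simp: M_def\<close>)
  also have "\<dots> = c 0 0 * det P + c L 0 * ((-1)^L * det Q)"
    using Ln by (simp add: M_def cofactor_def P_def Q_def)
  also have "det P = P $$ (k,k) * cofactor P k k"
    by (rule det_row_single[OF Pc]) (auto simp: P_def M_def n_def L_def)
  also have "det Q = Q $$ (k,0) * cofactor Q k 0"
    by (rule det_row_single[OF Qc]) (auto simp: Q_def M_def n_def L_def)
  finally have detM0: "det M = c 0 0 * (P $$ (k,k) * cofactor P k k) + c L 0 * ((-1)^L * (Q $$ (k,0) * cofactor Q k 0))" .
  have P1: "mat_delete P k k = 1\<^sub>m k"
    by (rule eq_matI) (auto simp: P_def M_def n_def L_def)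
  have Q1: "mat_delete Q k 0 = 1\<^sub>m k"
    by (rule eq_matI) (auto simp: Q_def M_def n_def L_def)
  have Pkk: "P $$ (k,k) = c L L" by (simp add: P_def M_def n_def L_def)
  have Qk0: "Q $$ (k,0) = c 0 L" by (simp add: Q_def M_def n_def L_def)
  have detM: "det M = c 0 0 * c L L - c L 0 * c 0 L"
    unfolding detM0 Pkk Qk0 cofactor_def P1 Q1 by (simp add: L_def)
  have "det A * det M = det A * (det A * det (mat_delete (mat_delete A 0 0) k k))"
    using det_mult[OF An M] AMeq detAM by metis
  hence "det M = det A * det (mat_delete (mat_delete A 0 0) k k)" using d by simp
  moreover have s: "(-1::'a)^k * (-1)^k = 1" by (simp add: power_mult_distrib[symmetric])
  moreover have "(- 1) ^ k * x * ((- 1) ^ k * y) = y * (x::'a)" for x y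
    using s by (metis mult.assoc mult.commute mult_1)
  ultimately show ?thesis unfolding detM by (simp add: c_def cofactor_def L_def)
qed



fun bw :: "nat \<Rightarrow> nat \<Rightarrow> nat" where
  "bw 0 h = (if h = 0 then 1 else 0)"
| "bw (Suc a) h = (if h = 0 then 0 else bw a (h - 1)) + bw a (Suc h)"

lemma bw_zero: "a < h \<Longrightarrow> bw a h = 0"
  by (induction a arbitrary: h) auto

lemma bw_diag: "bw a a = 1"
  by (induction a) (auto simp: bw_zero)

lemma shift_sum:
  fixes f g :: "nat \<Rightarrow> nat"
  assumes "f M = 0"
  shows "(\<Sum>h<Suc M. (if h = 0 then 0 else f (h-1)) * g h) = (\<Sum>h<Suc M. f h * g (Suc h))"
proof -
  have "(\<Sum>h<Suc M. (if h = 0 then 0 else f (h-1)) * g h) = (\<Sum>h<M. f h * g (Suc h))"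
    by (subst sum.lessThan_Suc_shift) simp
  also have "\<dots> = (\<Sum>h<Suc M. f h * g (Suc h))" using assms by simp
  finally show ?thesis .
qed

lemma bw_step:
  assumes "a < M" "c < M"
  shows "(\<Sum>h<Suc M. bw (Suc a) h * bw c h) = (\<Sum>h<Suc M. bw a h * bw (Suc c) h)"
proof -
  have za: "bw a M = 0" and zc: "bw c M = 0" using assms by (auto intro: bw_zero)
  have "(\<Sum>h<Suc M. bw (Suc a) h * bw c h)
      = (\<Sum>h<Suc M. (if h = 0 then 0 else bw a (h-1)) * bw c h) + (\<Sum>h<Suc M. bw a (Suc h) * bw c h)"
    by (simp add: algebra_simps sum.distrib)
  also have "(\<Sum>h<Suc M. (if h = 0 then 0 else bw a (h-1)) * bw c h) = (\<Sum>h<Suc M. bw a h * bw c (Suc h))"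
    by (rule shift_sum[where f="bw a", OF za])
  also have "(\<Sum>h<Suc M. bw a (Suc h) * bw c h) = (\<Sum>h<Suc M. bw c h * bw a (Suc h))"
    by (simp add: mult.commute)
  also have "\<dots> = (\<Sum>h<Suc M. (if h = 0 then 0 else bw c (h-1)) * bw a h)"
    by (rule shift_sum[where f="bw c", OF zc, symmetric])
  also have "(\<Sum>h<Suc M. bw a h * bw c (Suc h)) + (\<Sum>h<Suc M. (if h = 0 then 0 else bw c (h-1)) * bw a h)
      = (\<Sum>h<Suc M. bw a h * bw (Suc c) h)"
    by (simp add: algebra_simps sum.distrib)
  finally show ?thesis .
qed

lemma bw_conv: "a + c < N \<Longrightarrow> (\<Sum>h<N. bw a h * bw c h) = bw (a + c) 0"
proof (induction a arbitrary: c)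
  case 0
  have "(\<Sum>h<N. bw 0 h * bw c h) = bw 0 0 * bw c 0"
    by (rule sum_single) (use 0 in auto)
  then show ?case by simp
next
  case (Suc a)
  then obtain M where N: "N = Suc M" by (cases N) auto
  have "(\<Sum>h<N. bw (Suc a) h * bw c h) = (\<Sum>h<N. bw a h * bw (Suc c) h)"
    unfolding N by (rule bw_step) (use Suc.prems N in auto)
  also have "\<dots> = bw (a + Suc c) 0" by (rule Suc.IH) (use Suc.prems in auto)
  finally show ?case by simp
qed

lemma bw_closed: "a = h + 2 * d \<Longrightarrow> int (bw a h) = int (a choose d) - int (a choose (h + d + 1))"
proof (induction a arbitrary: h d)
  case 0 then show ?case by simp
next
  case (Suc a)
  show ?case
  proof (cases h)
    case 0
    then obtain d' where d: "d = Suc d'" using Suc.prems by (cases d) auto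
    have a: "a = 1 + 2 * d'" using Suc.prems 0 d by simp
    have "int (bw (Suc a) h) = int (bw a 1)" using 0 by simp
    also have "\<dots> = int (a choose d') - int (a choose (1 + d' + 1))" by (rule Suc.IH[OF a])
    finally show ?thesis using 0 d by simp
  next
    case (Suc h')
    have a: "a = h' + 2 * d" using Suc.prems Suc by simp
    have IH1: "int (bw a h') = int (a choose d) - int (a choose (h' + d + 1))" by (rule Suc.IH[OF a])
    show ?thesis
    proof (cases d)
      case 0
      have "bw a (Suc (Suc h')) = 0" using a 0 by (intro bw_zero) simp
      then show ?thesis using IH1 Suc 0 a by simp
    next
      case (Suc d')
      have a2: "a = Suc (Suc h') + 2 * d'" using a Suc by simp
      have IH2: "int (bw a (Suc (Suc h'))) = int (a choose d') - int (a choose (Suc (Suc h') + d' + 1))"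
        by (rule Suc.IH[OF a2])
      show ?thesis using IH1 IH2 \<open>h = Suc h'\<close> Suc by simp
    qed
  qed
qed



lemma nar_binsum: "(\<Sum>j<Suc k'. (Suc k' choose Suc j) * (Suc k' choose j)) = (2 * Suc k') choose (Suc k' + 1)"
proof -
  let ?k = "Suc k'"
  have "(\<Sum>j<Suc k'. (?k choose Suc j) * (?k choose j)) = (\<Sum>j\<le>k'. (?k choose j) * (?k choose (k' - j)))"
  proof (unfold lessThan_Suc_atMost, rule sum.cong[OF refl])
    fix j assume "j \<in> {..k'}"
    hence j: "j \<le> k'" by simp
    have "?k choose (k' - j) = ?k choose (?k - (k' - j))" by (rule binomial_symmetric) simp
    also have "?k - (k' - j) = Suc j" using j by simp
    finally show "(?k choose Suc j) * (?k choose j) = (?k choose j) * (?k choose (k' - j))" by simp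
  qed
  also have "\<dots> = (?k + ?k) choose k'" by (rule vandermonde)
  also have "\<dots> = (?k + ?k) choose ((?k + ?k) - k')" by (rule binomial_symmetric) simp
  also have "(?k + ?k) - k' = ?k + 1" by simp
  finally show ?thesis by (simp add: mult_2)
qed

lemma nar_at1: "poly (narayana k) 1 = of_int (int ((2*k) choose k) - int ((2*k) choose (k+1)))"
proof (cases k)
  case 0 then show ?thesis by (simp add: narayana_def)
next
  case (Suc k')
  have tm: "(of_nat (k' choose j) * of_nat (k choose j) / of_nat (j + 1) :: rat)
      = of_nat ((k choose Suc j) * (k choose j)) / of_nat k" for j
  proof -
    have "Suc k' * (k' choose j) = (Suc k' choose Suc j) * Suc j" by (rule Suc_times_binomial_eq)
    hence h: "(of_nat k :: rat) * of_nat (k' choose j) = of_nat (k choose Suc j) * of_nat (Suc j)"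
      unfolding Suc by (metis of_nat_mult)
    have "(of_nat (k' choose j) * of_nat (k choose j) / of_nat (j + 1) :: rat)
        = (of_nat k * of_nat (k' choose j)) * of_nat (k choose j) / (of_nat (j + 1) * of_nat k)"
      using Suc by simp
    also have "\<dots> = of_nat (k choose Suc j) * of_nat (k choose j) / of_nat k"
      unfolding h by simp
    finally show ?thesis by simp
  qed
  have "poly (narayana k) 1 = (\<Sum>j<k. of_nat (k' choose j) * of_nat (k choose j) / of_nat (j + 1) :: rat)"
    using Suc by (simp add: narayana_def poly_sum poly_monom)
  also have "\<dots> = (\<Sum>j<k. of_nat ((k choose Suc j) * (k choose j)) / of_nat k)"
    by (simp only: tm)
  also have "\<dots> = of_nat (\<Sum>j<k. (k choose Suc j) * (k choose j)) / of_nat k"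
    by (simp add: sum_divide_distrib)
  also have "(\<Sum>j<k. (k choose Suc j) * (k choose j)) = (2*k) choose (k+1)"
    unfolding Suc by (rule nar_binsum)
  finally have e1: "poly (narayana k) 1 = of_nat ((2*k) choose (k+1)) / of_nat k" .
  have a1: "Suc k * ((2*k) choose Suc k) = (2*k) * ((2*k - 1) choose k)" by (rule binomial_absorption)
  have a2: "(2*k - k) * ((2*k) choose k) = (2*k) * ((2*k - 1) choose k)" by (rule binomial_absorb_comp)
  have kk: "2*k - k = k" by simp
  have "Suc k * ((2*k) choose Suc k) = k * ((2*k) choose k)" using a1 a2 unfolding kk by metis
  hence "(of_nat (Suc k) :: rat) * of_nat ((2*k) choose Suc k) = of_nat k * of_nat ((2*k) choose k)"
    by (metis of_nat_mult)
  moreover have "k > 0" using Suc by simp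
  ultimately show ?thesis unfolding e1 by (simp add: field_simps)
qed



lemma cat_bw: "poly (narayana k) 1 = of_nat (bw (2*k) 0)"
proof -
  have "int (bw (2*k) 0) = int ((2*k) choose k) - int ((2*k) choose (k+1))"
    using bw_closed[of "2*k" 0 k] by simp
  hence "(of_nat (bw (2*k) 0) :: rat) = of_int (int ((2*k) choose k) - int ((2*k) choose (k+1)))"
    by (metis of_int_of_nat_eq)
  thus ?thesis using nar_at1[of k] by simp
qed

lemma det_G_nz: "det (mat n n (\<lambda>(i,j). (of_nat (bw (2*(i+j+m)) 0) :: rat))) \<noteq> 0"
proof
  define G where "G = mat n n (\<lambda>(i,j). (of_nat (bw (2*(i+j+m)) 0) :: rat))"
  assume "det (mat n n (\<lambda>(i,j). (of_nat (bw (2*(i+j+m)) 0) :: rat))) = 0"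
  hence "det G = 0" by (simp add: G_def)
  then obtain v where v: "v \<in> carrier_vec n" "v \<noteq> 0\<^sub>v n" "G *\<^sub>v v = 0\<^sub>v n"
    using det_0_iff_vec_prod_zero_field[of G n] by (auto simp: G_def)
  define N where "N = 4*n + 2*m + 1"
  define b where "b i h = (of_nat (bw (2*i+m) h) :: rat)" for i h
  define w where "w h = (\<Sum>i<n. b i h * v $ i)" for h
  have Gv: "(\<Sum>j<n. G $$ (i,j) * v $ j) = 0" if "i < n" for i
  proof -
    have "(G *\<^sub>v v) $ i = 0" using v(3) that by simp
    thus ?thesis using that v(1) by (simp add: G_def scalar_prod_def atLeast0LessThan)
  qed
  have Gent: "G $$ (i,j) = (\<Sum>h<N. b i h * b j h)" if "i<n" "j<n" for i j
  proof -
    have "(\<Sum>h<N. bw (2*i+m) h * bw (2*j+m) h) = bw ((2*i+m) + (2*j+m)) 0"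
      by (rule bw_conv) (use that in \<open>simp add: N_def\<close>)
    also have "(2*i+m) + (2*j+m) = 2*(i+j+m)" by simp
    finally have "(of_nat (\<Sum>h<N. bw (2*i+m) h * bw (2*j+m) h) :: rat) = of_nat (bw (2*(i+j+m)) 0)"
      by simp
    thus ?thesis using that by (simp add: G_def b_def)
  qed
  have "(\<Sum>h<N. w h * w h) = (\<Sum>h<N. \<Sum>i<n. \<Sum>j<n. v $ i * (b i h * b j h) * v $ j)"
    by (simp add: w_def sum_product mult_ac)
  also have "\<dots> = (\<Sum>i<n. \<Sum>h<N. \<Sum>j<n. v $ i * (b i h * b j h) * v $ j)"
    by (rule sum.swap)
  also have "\<dots> = (\<Sum>i<n. \<Sum>j<n. \<Sum>h<N. v $ i * (b i h * b j h) * v $ j)"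
    by (rule sum.cong[OF refl], rule sum.swap)
  also have "\<dots> = (\<Sum>i<n. v $ i * (\<Sum>j<n. G $$ (i,j) * v $ j))"
    by (rule sum.cong[OF refl]) (simp add: Gent sum_distrib_left sum_distrib_right mult.assoc)
  also have "\<dots> = 0" by (simp add: Gv)
  finally have sq0: "(\<Sum>h<N. w h * w h) = 0" .
  have w0: "w h = 0" if "h < N" for h
  proof -
    have "\<forall>h\<in>{..<N}. w h * w h = 0"
      using sq0 by (subst (asm) sum_nonneg_eq_0_iff) auto
    thus ?thesis using that by simp
  qed
  define S where "S = {j. j < n \<and> v $ j \<noteq> 0}"
  have "S \<noteq> {}"
  proof
    assume "S = {}"
    hence "v = 0\<^sub>v n" using v(1) by (intro eq_vecI) (auto simp: S_def)
    thus False using v(2) by simp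
  qed
  have finS: "finite S" by (simp add: S_def)
  define J where "J = Max S"
  have JS: "J \<in> S" using finS \<open>S \<noteq> {}\<close> by (simp add: J_def)
  have Jmax: "j \<in> S \<Longrightarrow> j \<le> J" for j using finS by (simp add: J_def)
  have "w (2*J+m) = b J (2*J+m) * v $ J"
    unfolding w_def
  proof (rule sum_single)
    fix i assume i: "i \<in> {..<n}" "i \<noteq> J"
    show "b i (2*J+m) * v $ i = 0"
    proof (cases "i < J")
      case True
      hence "bw (2*i+m) (2*J+m) = 0" by (intro bw_zero) simp
      thus ?thesis by (simp add: b_def)
    next
      case False
      hence "i \<notin> S" using Jmax i by force
      thus ?thesis using i by (simp add: S_def)
    qed
  qed (use JS in \<open>auto simp: S_def\<close>)
  also have "b J (2*J+m) = 1" by (simp add: b_def bw_diag)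
  finally have "w (2*J+m) = v $ J" by simp
  moreover have "w (2*J+m) = 0" using JS by (intro w0) (auto simp: S_def N_def)
  ultimately show False using JS by (simp add: S_def)
qed

definition hmat :: "nat \<Rightarrow> nat \<Rightarrow> rat poly mat" where
  "hmat m n = mat n n (\<lambda>(i,j). narayana (i+j+m))"

lemma hankel_hmat: "hankel_narayana m n = det (hmat m n)"
  by (simp add: hankel_narayana_def hmat_def)

lemma hmat_carrier: "hmat m n \<in> carrier_mat n n" by (simp add: hmat_def)

interpretation ev1: comm_ring_hom "\<lambda>p::rat poly. poly p 1"
  by unfold_locales auto

lemma hankel_nz: "hankel_narayana m n \<noteq> 0"
proof
  assume h: "hankel_narayana m n = 0"
  have "map_mat (\<lambda>p. poly p 1) (hmat m n) = mat n n (\<lambda>(i,j). (of_nat (bw (2*(i+j+m)) 0) :: rat))"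
    by (rule eq_matI) (auto simp: hmat_def cat_bw)
  hence "poly (hankel_narayana m n) 1 = det (mat n n (\<lambda>(i,j). (of_nat (bw (2*(i+j+m)) 0) :: rat)))"
    unfolding hankel_hmat by (metis ev1.hom_det)
  thus False using h det_G_nz by simp
qed


lemma nar_coeff_int: "coeff (narayana k) i \<in> \<int>"
proof (cases k)
  case 0 then show ?thesis by (simp add: narayana_def coeff_1)
next
  case (Suc k')
  define c where "c j = (of_nat ((k - 1) choose j) * of_nat (k choose j) / of_nat (j + 1) :: rat)" for j
  have "coeff (narayana k) i = (\<Sum>j<k. coeff (monom (c j) j) i)"
    using Suc by (simp add: narayana_def coeff_sum c_def)
  also have "\<dots> = (\<Sum>j<k. if i = j then c j else 0)"
    by (simp add: coeff_monom)
  also have "\<dots> = (if i < k then c i else 0)" by simp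
  finally have e: "coeff (narayana k) i = (if i < k then c i else 0)" .
  have "c i \<in> \<int>"
  proof (cases i)
    case 0 then show ?thesis by (simp add: c_def)
  next
    case (Suc i')
    have A1: "Suc (Suc i') * (Suc k' choose Suc (Suc i')) = Suc k' * (k' choose Suc i')"
      using binomial_absorption[of "Suc i'" "Suc k'"] by simp
    have A2: "Suc i' * (Suc k' choose Suc i') = Suc k' * (k' choose i')"
      using binomial_absorption[of i' "Suc k'"] by simp
    define x1 where "x1 = (of_nat (k' choose Suc i') :: rat)"
    define x2 where "x2 = (of_nat (Suc k' choose Suc i') :: rat)"
    define y1 where "y1 = (of_nat (Suc k' choose Suc (Suc i')) :: rat)"
    define y2 where "y2 = (of_nat (k' choose i') :: rat)"
    define K where "K = (of_nat (Suc k') :: rat)"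
    define I where "I = (of_nat (Suc i') :: rat)"
    have B1: "(I + 1) * y1 = K * x1"
      using arg_cong[OF A1, of "of_nat :: nat \<Rightarrow> rat"] by (simp add: I_def y1_def K_def x1_def algebra_simps)
    have B2: "I * x2 = K * y2"
      unfolding I_def x2_def K_def y2_def by (metis A2 of_nat_mult)
    have ci: "c i = x1 * x2 / (I + 1)" using Suc \<open>k = Suc k'\<close> by (simp add: c_def x1_def x2_def I_def)
    have "(I + 1) * (x2 * x1 - y1 * y2) = x1 * x2"
    proof -
      have "(I + 1) * (x2 * x1 - y1 * y2) = (I + 1) * x2 * x1 - ((I + 1) * y1) * y2" by (simp add: algebra_simps)
      also have "\<dots> = (I + 1) * x2 * x1 - (I * x2) * x1" unfolding B1 B2 by (simp add: algebra_simps)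
      finally show ?thesis by (simp add: algebra_simps)
    qed
    moreover have "I + 1 \<noteq> 0" by (simp add: I_def)
    ultimately have "c i = x2 * x1 - y1 * y2" unfolding ci by (simp add: field_simps)
    thus ?thesis by (simp add: x1_def x2_def y1_def y2_def)
  qed
  thus ?thesis using e by simp
qed

interpretation mp: comm_ring_hom "map_poly (of_int :: int \<Rightarrow> rat)"
proof
  fix p q :: "int poly"
  show "map_poly of_int (p + q) = (map_poly of_int p + map_poly of_int q :: rat poly)"
    by (rule poly_eqI) (simp add: coeff_map_poly)
  show "map_poly of_int (p * q) = (map_poly of_int p * map_poly of_int q :: rat poly)"
    by (rule poly_eqI) (simp add: coeff_map_poly coeff_mult)
  show "map_poly of_int 1 = (1::rat poly)"
    by (metis map_poly_1' of_int_1)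
qed simp

lemma int_poly_back:
  assumes "\<And>l. coeff (p :: rat poly) l \<in> \<int>"
  shows "map_poly of_int (map_poly floor p) = p"
proof (rule poly_eqI)
  fix l
  obtain z where "coeff p l = of_int z" using assms[of l] by (auto elim: Ints_cases)
  thus "coeff (map_poly of_int (map_poly floor p)) l = coeff p l"
    by (simp add: coeff_map_poly)
qed

lemma hankel_int: "coeff (hankel_narayana m n) l \<in> \<int>"
proof -
  define Hi where "Hi = map_mat (map_poly floor) (hmat m n)"
  have "map_mat (map_poly of_int) Hi = hmat m n"
    by (rule eq_matI) (auto simp: Hi_def hmat_def int_poly_back nar_coeff_int)
  hence "hankel_narayana m n = map_poly of_int (det Hi)"
    unfolding hankel_hmat by (metis mp.hom_det)
  thus ?thesis by (simp add: coeff_map_poly)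
qed

lemma hmat_del:
  "mat_delete (hmat m (Suc (Suc k))) 0 0 = hmat (m+2) (Suc k)"
  "mat_delete (hmat m (Suc (Suc k))) (Suc k) (Suc k) = hmat m (Suc k)"
  "mat_delete (hmat m (Suc (Suc k))) 0 (Suc k) = hmat (m+1) (Suc k)"
  "mat_delete (hmat m (Suc (Suc k))) (Suc k) 0 = hmat (m+1) (Suc k)"
  "mat_delete (hmat (m+2) (Suc k)) k k = hmat (m+2) k"
  by (rule eq_matI; auto simp: hmat_def)+

lemma hankel_rec:
  "hankel_narayana m (Suc k) * hankel_narayana (m + 2) (Suc k) - (hankel_narayana (m + 1) (Suc k))^2
   = hankel_narayana m (Suc (Suc k)) * hankel_narayana (m + 2) k"
proof -
  have "det (mat_delete (hmat m (Suc (Suc k))) 0 0) * det (mat_delete (hmat m (Suc (Suc k))) (Suc k) (Suc k))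
       - det (mat_delete (hmat m (Suc (Suc k))) 0 (Suc k)) * det (mat_delete (hmat m (Suc (Suc k))) (Suc k) 0)
       = det (hmat m (Suc (Suc k))) * det (mat_delete (mat_delete (hmat m (Suc (Suc k))) 0 0) k k)"
    by (rule desnanot_jacobi[OF hmat_carrier]) (metis hankel_hmat hankel_nz)
  thus ?thesis unfolding hmat_del hankel_hmat by (simp add: power2_eq_square mult.commute)
qed

theorem mainTheorem8:
  shows "(\<forall>m n i. coeff (hankel_narayana m n) i \<in> \<int>)
    \<and> (\<forall>m n. hankel_narayana m n \<noteq> 0)
    \<and> (\<forall>m. hankel_narayana m 0 = 1)
    \<and> (\<forall>m. hankel_narayana m 1 = narayana m)
    \<and> (\<forall>m n. n \<ge> 2 \<longrightarrow>
          hankel_narayana m (n - 1) * hankel_narayana (m + 2) (n - 1) - (hankel_narayana (m + 1) (n - 1))^2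
          = hankel_narayana m n * hankel_narayana (m + 2) (n - 2))
    \<and> (\<forall>q :: nat \<Rightarrow> nat \<Rightarrow> rat poly fract.
          (\<forall>m. q m 0 = 1) \<longrightarrow>
          (\<forall>m. q m 1 = to_fract (narayana m)) \<longrightarrow>
          (\<forall>m n. n \<ge> 2 \<longrightarrow>
             q m (n - 1) * q (m + 2) (n - 1) - (q (m + 1) (n - 1))^2 = q m n * q (m + 2) (n - 2)) \<longrightarrow>
          (\<forall>m n. q m n = to_fract (hankel_narayana m n)))"
proof (intro conjI allI impI)
  fix m n i show "coeff (hankel_narayana m n) i \<in> \<int>" by (rule hankel_int)
next
  fix m n show "hankel_narayana m n \<noteq> 0" by (rule hankel_nz)
next
  fix m show "hankel_narayana m 0 = 1" by (simp add: hankel_narayana_def)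
next
  fix m show "hankel_narayana m 1 = narayana m"
    unfolding hankel_narayana_def by (subst det_single) auto
next
  fix m n :: nat assume "2 \<le> n"
  then obtain k where n: "n = Suc (Suc k)" by (metis add_2_eq_Suc le_Suc_ex)
  show "hankel_narayana m (n - 1) * hankel_narayana (m + 2) (n - 1) - (hankel_narayana (m + 1) (n - 1))^2
          = hankel_narayana m n * hankel_narayana (m + 2) (n - 2)"
    unfolding n using hankel_rec[of m k] by simp
next
  fix q :: "nat \<Rightarrow> nat \<Rightarrow> rat poly fract"
  assume q0: "\<forall>m. q m 0 = 1" and q1: "\<forall>m. q m 1 = to_fract (narayana m)"
    and qr: "\<forall>m n. n \<ge> 2 \<longrightarrow>
             q m (n - 1) * q (m + 2) (n - 1) - (q (m + 1) (n - 1))^2 = q m n * q (m + 2) (n - 2)"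
  have h0: "hankel_narayana m 0 = 1" for m by (simp add: hankel_narayana_def)
  have h1: "hankel_narayana m 1 = narayana m" for m
    unfolding hankel_narayana_def by (subst det_single) auto
  fix m n
  show "q m n = to_fract (hankel_narayana m n)"
  proof (induction n arbitrary: m rule: less_induct)
    case (less n)
    show ?case
    proof (cases n)
      case 0 then show ?thesis using q0 h0 by simp
    next
      case (Suc n')
      show ?thesis
      proof (cases n')
        case 0 then show ?thesis using Suc q1 h1 by simp
      next
        case (Suc k)
        have nk: "n = Suc (Suc k)" using Suc \<open>n = Suc n'\<close> by simp
        have IH1: "q j (Suc k) = to_fract (hankel_narayana j (Suc k))" for j
          using less.IH[of "Suc k" j] nk by simp
        have IH2: "q j k = to_fract (hankel_narayana j k)" for j
          using less.IH[of k j] nk by simp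
        have "q m n * q (m + 2) k = q m (Suc k) * q (m + 2) (Suc k) - (q (m + 1) (Suc k))^2"
          using qr[rule_format, of n m] nk by simp
        also have "\<dots> = to_fract (hankel_narayana m n * hankel_narayana (m + 2) k)"
          unfolding IH1 nk hankel_rec[of m k, symmetric] by (simp add: power2_eq_square)
        finally have "q m n * to_fract (hankel_narayana (m + 2) k)
            = to_fract (hankel_narayana m n) * to_fract (hankel_narayana (m + 2) k)"
          unfolding IH2 by simp
        moreover have "to_fract (hankel_narayana (m + 2) k) \<noteq> 0" using hankel_nz by simp
        ultimately show ?thesis by simp
      qed
    qed
  qed
qed

end
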